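(* Let $p$ be a prime, $n\ge2$, $\hat{X}_{n,p}=\{\mathbf{x}\in\mathbb{Z}_p^n : (\mathbf{x}[1],\dots,\mathbf{x}[n-1])\neq(0,\dots,0)\}$ (entries indexed $0,\dots,n-1$), and $\mathcal{L}_{n,p}=\{L_{\mathbf{a}}:\mathbf{a}\in\mathbb{Z}_p^n,\ \mathbf{a}[0]=1\}$ where $L_{\mathbf{a}}:\hat{X}_{n,p}\to\{0,1\}$, $L_{\mathbf{a}}(\mathbf{x})=1$ iff $\mathbf{a}\cdot\mathbf{x}\equiv1\pmod p$. For any query function $g:\hat{X}_{n,p}\to\{-1,+1\}$, there are at most $p^{2n/3+2}$ predicates $f\in\mathcal{L}_{n,p}$ that are not $1/p^{n/3}$-independent from $g$.
   Context: For a predicate $f$ on $\hat{X}_{n,p}$ let $S_f=\{\mathbf{x}\in\hat{X}_{n,p}: f(\mathbf{x})=1\}$. A predicate $f$ is $\xi$-independent from $g$ if $\left|\mathbf{E}_{x\in S_f}[g(x)]-\mathbf{E}_{x\in\hat{X}_{n,p}}[g(x)]\right|\le\xi$, expectations taken over the uniform distribution on the indicated sets. *)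

theory Defs
  imports "HOL-Computational_Algebra.Primes" Complex_Main
begin

text \<open>Vectors of Z_p^n are represented as functions nat => nat with entries
  in {0..<p} at indices 0..n-1 and 0 elsewhere (extensional representation).\<close>

definition Zpn :: "nat \<Rightarrow> nat \<Rightarrow> (nat \<Rightarrow> nat) set" where
  "Zpn n p = {x. (\<forall>i<n. x i < p) \<and> (\<forall>i\<ge>n. x i = 0)}"

definition Xhat :: "nat \<Rightarrow> nat \<Rightarrow> (nat \<Rightarrow> nat) set" where
  "Xhat n p = {x \<in> Zpn n p. \<exists>i\<in>{1..<n}. x i \<noteq> 0}"

definition dotp :: "nat \<Rightarrow> (nat \<Rightarrow> nat) \<Rightarrow> (nat \<Rightarrow> nat) \<Rightarrow> nat" where
  "dotp n a x = (\<Sum>i<n. a i * x i)"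

text \<open>The predicate L_a on Xhat n p (value 0 outside Xhat, for definiteness).\<close>
definition Lpred :: "nat \<Rightarrow> nat \<Rightarrow> (nat \<Rightarrow> nat) \<Rightarrow> (nat \<Rightarrow> nat) \<Rightarrow> real" where
  "Lpred n p a = (\<lambda>x. if x \<in> Xhat n p \<and> dotp n a x mod p = 1 then 1 else 0)"

definition Lclass :: "nat \<Rightarrow> nat \<Rightarrow> ((nat \<Rightarrow> nat) \<Rightarrow> real) set" where
  "Lclass n p = {Lpred n p a | a. a \<in> Zpn n p \<and> a 0 = 1}"

definition avg :: "'a set \<Rightarrow> ('a \<Rightarrow> real) \<Rightarrow> real" where
  "avg S g = (\<Sum>x\<in>S. g x) / real (card S)"

definition Sf :: "nat \<Rightarrow> nat \<Rightarrow> ((nat \<Rightarrow> nat) \<Rightarrow> real) \<Rightarrow> (nat \<Rightarrow> nat) set" where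
  "Sf n p f = {x \<in> Xhat n p. f x = 1}"

definition xi_independent ::
  "nat \<Rightarrow> nat \<Rightarrow> real \<Rightarrow> ((nat \<Rightarrow> nat) \<Rightarrow> real) \<Rightarrow> ((nat \<Rightarrow> nat) \<Rightarrow> real) \<Rightarrow> bool" where
  "xi_independent n p \<xi> f g \<longleftrightarrow> \<bar>avg (Sf n p f) g - avg (Xhat n p) g\<bar> \<le> \<xi>"

end

theory Submission
  imports Defs "HOL-Number_Theory.Cong"
begin


definition ell :: "nat \<Rightarrow> nat \<Rightarrow> (nat \<Rightarrow> nat) \<Rightarrow> (nat \<Rightarrow> nat) \<Rightarrow> nat" where
  "ell n p a v = (\<Sum>i<n. a i * v i) mod p"

definition shf :: "nat \<Rightarrow> nat \<Rightarrow> (nat \<Rightarrow> nat) \<Rightarrow> (nat \<Rightarrow> nat) \<Rightarrow> (nat \<Rightarrow> nat)" where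
  "shf p k d a = (\<lambda>i. (a i + k * d i) mod p)"

definition Aset :: "nat \<Rightarrow> nat \<Rightarrow> (nat \<Rightarrow> nat) set" where
  "Aset n p = {a \<in> Zpn n p. a 0 = 1}"

definition Dset :: "nat \<Rightarrow> nat \<Rightarrow> (nat \<Rightarrow> nat) set" where
  "Dset n p = {a \<in> Zpn n p. a 0 = 0}"

definition Vset :: "nat \<Rightarrow> nat \<Rightarrow> (nat \<Rightarrow> nat) set" where
  "Vset n p = {v \<in> Dset n p. \<exists>i\<in>{1..<n}. v i \<noteq> 0}"

lemma finite_Zpn: "finite (Zpn n p)"
proof -
  have "Zpn n p \<subseteq> {f. \<forall>x. (x \<in> {..<n} \<longrightarrow> f x \<in> {..<p}) \<and> (x \<notin> {..<n} \<longrightarrow> f x = 0)}"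
    by (auto simp: Zpn_def)
  then show ?thesis using finite_subset finite_set_of_finite_funs[of "{..<n}" "{..<p}" 0] by blast
qed

lemma finite_sets: "finite (Aset n p)" "finite (Dset n p)" "finite (Vset n p)" "finite (Xhat n p)"
  using finite_Zpn by (auto simp: Aset_def Dset_def Vset_def Xhat_def)

lemma mod_sum_mult: "(\<Sum>i<n. (f i mod p) * v i) mod p = (\<Sum>i<n. f i * v i) mod (p::nat)"
proof -
  have "(\<Sum>i<n. (f i mod p) * v i) mod p = (\<Sum>i<n. ((f i mod p) * v i) mod p) mod p"
    by (simp add: mod_sum_eq)
  also have "\<dots> = (\<Sum>i<n. (f i * v i) mod p) mod p"
    by (simp add: mod_mult_left_eq)
  also have "\<dots> = (\<Sum>i<n. f i * v i) mod p" by (simp add: mod_sum_eq)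
  finally show ?thesis .
qed

lemma modlin: "(X + k * Y) mod p = (X mod p + k * (Y mod p)) mod (p::nat)"
proof -
  have "(X mod p + k * (Y mod p)) mod p = ((X mod p) mod p + (k * (Y mod p)) mod p) mod p"
    by (rule mod_add_eq[symmetric])
  also have "\<dots> = (X mod p + (k * Y) mod p) mod p" by (simp only: mod_mod_trivial mod_mult_right_eq)
  also have "\<dots> = (X + k * Y) mod p" by (rule mod_add_eq)
  finally show ?thesis by simp
qed

lemma ell_shf: "ell n p (shf p k d a) v = (ell n p a v + k * ell n p d v) mod p"
proof -
  have "ell n p (shf p k d a) v = (\<Sum>i<n. (a i + k * d i) * v i) mod p"
    unfolding ell_def shf_def by (rule mod_sum_mult)
  also have "(\<Sum>i<n. (a i + k * d i) * v i) = (\<Sum>i<n. a i * v i) + k * (\<Sum>i<n. d i * v i)"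
    by (simp add: algebra_simps sum.distrib sum_distrib_left)
  also have "((\<Sum>i<n. a i * v i) + k * (\<Sum>i<n. d i * v i)) mod p
     = ((\<Sum>i<n. a i * v i) mod p + k * ((\<Sum>i<n. d i * v i) mod p)) mod p"
    by (rule modlin)
  finally show ?thesis unfolding ell_def .
qed

lemma shf_A:
  assumes p: "p \<ge> 2" and d: "d \<in> Dset n p" and a: "a \<in> Aset n p"
  shows "shf p k d a \<in> Aset n p"
proof -
  have "\<forall>i<n. shf p k d a i < p" using p by (simp add: shf_def)
  moreover have "\<forall>i\<ge>n. shf p k d a i = 0" using d a by (simp add: shf_def Dset_def Aset_def Zpn_def)
  moreover have "shf p k d a 0 = 1" using d a p by (simp add: shf_def Dset_def Aset_def)
  ultimately show ?thesis by (simp add: Aset_def Zpn_def)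
qed

lemma shf_inj:
  assumes "p \<ge> 2"
  shows "inj_on (shf p k d) (Aset n p)"
proof
  fix a b assume a: "a \<in> Aset n p" and b: "b \<in> Aset n p" and e: "shf p k d a = shf p k d b"
  show "a = b"
  proof
    fix i
    have "(a i + k * d i) mod p = (b i + k * d i) mod p" using fun_cong[OF e, of i] unfolding shf_def .
    then have "[a i = b i] (mod p)" unfolding cong_def[symmetric] by (rule cong_add_rcancel_nat[THEN iffD1])
    then have m: "a i mod p = b i mod p" unfolding cong_def .
    show "a i = b i"
    proof (cases "i < n")
      case True
      then have "a i < p" "b i < p" using a b by (auto simp: Aset_def Zpn_def)
      then show ?thesis using m by simp
    next
      case False
      then show ?thesis using a b by (auto simp: Aset_def Zpn_def)
    qed
  qed
qed

lemma shf_bij: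
  assumes "p \<ge> 2" "d \<in> Dset n p"
  shows "shf p k d ` Aset n p = Aset n p"
  using endo_inj_surj[OF finite_sets(1) _ shf_inj[OF assms(1)]] shf_A[OF assms] by blast

lemma rot_sum:
  assumes "c < (p::nat)"
  shows "(\<Sum>k<p. F ((c + k) mod p)) = (\<Sum>s<p. (F s :: real))"
proof -
  have inj: "inj_on (\<lambda>k. (c + k) mod p) {..<p}"
  proof
    fix x y assume "x \<in> {..<p}" "y \<in> {..<p}" "(c + x) mod p = (c + y) mod p"
    then have h: "[c + x = c + y] (mod p)" unfolding cong_def by simp
    then have "[x = y] (mod p)" using cong_add_lcancel_nat by blast
    then show "x = y" using \<open>x \<in> {..<p}\<close> \<open>y \<in> {..<p}\<close> by (simp add: cong_def)
  qed
  have im: "(\<lambda>k. (c + k) mod p) ` {..<p} = {..<p}"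
    by (rule endo_inj_surj[OF _ _ inj]) auto
  show ?thesis using sum.reindex[OF inj, of F] im by simp
qed

lemma shift_sum:
  assumes p: "p \<ge> 2" and d: "d \<in> Dset n p" and dv: "ell n p d v = 1" and dw: "ell n p d w = 0"
  shows "real p * (\<Sum>a\<in>Aset n p. F (ell n p a v) * H (ell n p a w))
       = (\<Sum>s<p. F s) * (\<Sum>a\<in>Aset n p. H (ell n p a w))"
proof -
  let ?S = "\<Sum>a\<in>Aset n p. F (ell n p a v) * H (ell n p a w)"
  have eq: "?S = (\<Sum>a\<in>Aset n p. F ((ell n p a v + k) mod p) * H (ell n p a w))" for k
  proof -
    have "?S = (\<Sum>a\<in>shf p k d ` Aset n p. F (ell n p a v) * H (ell n p a w))"
      using shf_bij[OF p d] by simp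
    also have "\<dots> = (\<Sum>a\<in>Aset n p. F (ell n p (shf p k d a) v) * H (ell n p (shf p k d a) w))"
      by (subst sum.reindex[OF shf_inj[OF p]]) simp
    also have "\<dots> = (\<Sum>a\<in>Aset n p. F ((ell n p a v + k) mod p) * H (ell n p a w))"
      by (simp only: ell_shf dv dw mult_1_right mult_0_right add_0_right) (simp add: ell_def)
    finally show ?thesis .
  qed
  have "real p * ?S = (\<Sum>k<p. ?S)" by simp
  also have "\<dots> = (\<Sum>k<p. \<Sum>a\<in>Aset n p. F ((ell n p a v + k) mod p) * H (ell n p a w))"
    using eq by simp
  also have "\<dots> = (\<Sum>a\<in>Aset n p. (\<Sum>k<p. F ((ell n p a v + k) mod p)) * H (ell n p a w))"
    by (subst sum.swap) (simp add: sum_distrib_right)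
  also have "\<dots> = (\<Sum>a\<in>Aset n p. (\<Sum>s<p. F s) * H (ell n p a w))"
    using p by (intro sum.cong refl, subst rot_sum) (auto simp: ell_def)
  also have "\<dots> = (\<Sum>s<p. F s) * (\<Sum>a\<in>Aset n p. H (ell n p a w))"
    by (simp add: sum_distrib_left)
  finally show ?thesis .
qed




lemma ell_int: "int (ell n p a v) = (\<Sum>i<n. int (a i) * int (v i)) mod int p"
  unfolding ell_def by (simp add: zmod_int of_nat_sum)

lemma exists_d1:
  assumes pr: "prime p" and v: "v \<in> Vset n p"
  shows "\<exists>d\<in>Dset n p. ell n p d v = 1"
proof -
  from v obtain i where i: "i \<in> {1..<n}" "v i \<noteq> 0" and vZ: "v \<in> Zpn n p" and v0: "v 0 = 0"
    by (auto simp: Vset_def Dset_def)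
  have p2: "p \<ge> 2" using pr prime_ge_2_nat by blast
  have "v i < p" using vZ i by (auto simp: Zpn_def)
  then have "\<not> p dvd v i" using i(2) by (meson dvd_imp_le not_gr0 not_le)
  then have "coprime (v i) p" using pr by (simp add: coprime_commute prime_imp_coprime)
  then obtain y where y: "[v i * y = Suc 0] (mod p)" using cong_solve_coprime_nat by blast
  define d where "d = (\<lambda>j. if j = i then y mod p else 0)"
  have dD: "d \<in> Dset n p" using i p2 by (auto simp: d_def Dset_def Zpn_def)
  have "(\<Sum>j<n. d j * v j) = (\<Sum>j<n. if j = i then y mod p * v i else 0)"
    by (intro sum.cong) (auto simp: d_def)
  also have "\<dots> = y mod p * v i" using i by simp
  finally have "ell n p d v = (y mod p * v i) mod p" by (simp add: ell_def)
  also have "\<dots> = (y * v i) mod p" by (rule mod_mult_left_eq)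
  also have "\<dots> = (v i * y) mod p" by (simp add: mult.commute)
  also have "\<dots> = 1" using y p2 by (simp add: cong_def)
  finally show ?thesis using dD by blast
qed

definition mults :: "nat \<Rightarrow> nat \<Rightarrow> (nat \<Rightarrow> nat) \<Rightarrow> (nat \<Rightarrow> nat) set" where
  "mults n p v = (\<lambda>c. (\<lambda>i. (c * v i) mod p)) ` {..<p}"

lemma card_mults: "card (mults n p v) \<le> p"
  unfolding mults_def using card_image_le[of "{..<p}"] by simp

lemma modh: "((a mod m)*b + (c mod m)*d) mod m = (a*b + c*d) mod (m::int)"
  by (metis mod_add_eq mod_mult_left_eq)

lemma exists_d2:
  assumes pr: "prime p" and v: "v \<in> Vset n p" and w: "w \<in> Dset n p" and nm: "w \<notin> mults n p v"
  shows "\<exists>d\<in>Dset n p. ell n p d v = 1 \<and> ell n p d w = 0"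
proof -
  from v obtain i where i: "i \<in> {1..<n}" "v i \<noteq> 0" and vZ: "v \<in> Zpn n p" and v0: "v 0 = 0"
    by (auto simp: Vset_def Dset_def)
  from w have wZ: "w \<in> Zpn n p" and w0: "w 0 = 0" by (auto simp: Dset_def)
  have p2: "p \<ge> 2" using pr prime_ge_2_nat by blast
  have "v i < p" using vZ i by (auto simp: Zpn_def)
  then have "\<not> p dvd v i" using i(2) by (meson dvd_imp_le not_gr0 not_le)
  then have "coprime (v i) p" using pr by (simp add: coprime_commute prime_imp_coprime)
  then obtain y where y: "[v i * y = Suc 0] (mod p)" using cong_solve_coprime_nat by blast
  define c where "c = (w i * y) mod p"
  have "c < p" using p2 by (simp add: c_def)
  then have "w \<noteq> (\<lambda>j. (c * v j) mod p)" using nm unfolding mults_def by blast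
  then obtain j where j: "w j \<noteq> (c * v j) mod p" by blast
  have jn: "j < n" using j vZ wZ by (auto simp: Zpn_def) (metis not_le mod_0 mult_0_right)
  have j0: "j \<noteq> 0"
  proof
    assume "j = 0" then show False using j v0 w0 by simp
  qed
  have wi: "(c * v i) mod p = w i"
  proof -
    have "(c * v i) mod p = (w i * (v i * y)) mod p" unfolding c_def by (metis mod_mult_right_eq mult.assoc mult.commute)
    also have "\<dots> = (w i * 1) mod p" using y by (metis cong_def mod_mult_right_eq One_nat_def)
    also have "\<dots> = w i" using wZ i by (simp add: Zpn_def)
    finally show ?thesis .
  qed
  have ji: "j \<noteq> i" using j wi by auto
  define D where "D = int (v i) * int (w j) - int (v j) * int (w i)"
  have Dnz: "\<not> int p dvd D"
  proof
    assume "int p dvd D"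
    then have "int p dvd D * int y" by simp
    moreover have "D * int y = int (w j) * int (v i * y) - int (v j) * int (w i * y)"
      by (simp add: D_def algebra_simps)
    ultimately have e1: "[int (w j) * int (v i * y) = int (v j) * int (w i * y)] (mod int p)"
      by (simp add: cong_iff_dvd_diff)
    have y': "[int (v i * y) = 1] (mod int p)" using cong_int_iff[of "v i * y" 1 p] y by simp
    have e2: "[int (w j) * int (v i * y) = int (w j) * 1] (mod int p)"
      using cong_scalar_left[OF y', of "int (w j)"] .
    have c': "[int (w i * y) = int c] (mod int p)" unfolding c_def cong_int_iff by (simp add: cong_def)
    have e3: "[int (v j) * int (w i * y) = int (v j) * int c] (mod int p)"
      using cong_scalar_left[OF c', of "int (v j)"] .
    have "[int (w j) * 1 = int (v j) * int c] (mod int p)"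
      using cong_trans[OF cong_trans[OF cong_sym[OF e2] e1] e3] .
    then have "[int (w j) = int (c * v j)] (mod int p)" by (simp add: mult.commute)
    then have "w j mod p = (c * v j) mod p" using cong_int_iff cong_def by blast
    then show False using j wZ jn by (simp add: Zpn_def)
  qed
  moreover have "prime (int p)" using pr by simp
  ultimately have "coprime (int p) D" using prime_imp_coprime by blast
  then have "coprime D (int p)" by (simp add: coprime_commute)
  then obtain z where z: "[D * z = 1] (mod int p)" using cong_solve_coprime_int by blast
  define di where "di = nat ((int (w j) * z) mod int p)"
  define dj where "dj = nat ((- int (w i) * z) mod int p)"
  have p0: "int p > 0" using p2 by simp
  have di: "int di = (int (w j) * z) mod int p" unfolding di_def using p0 by simp
  have dj: "int dj = (- int (w i) * z) mod int p" unfolding dj_def using p0 by simp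
  define d where "d = (\<lambda>k. if k = i then di else if k = j then dj else 0)"
  have "int di < int p" using di p0 by simp
  then have dip: "di < p" by simp
  have "int dj < int p" using dj p0 by simp
  then have djp: "dj < p" by simp
  have dD: "d \<in> Dset n p" using i jn j0 ji dip djp
    unfolding Dset_def Zpn_def d_def by auto
  have sumd: "(\<Sum>k<n. int (d k) * int (u k)) = int di * int (u i) + int dj * int (u j)" for u
  proof -
    have "(\<Sum>k<n. int (d k) * int (u k)) = (\<Sum>k<n. (if k = i then int di * int (u i) else 0) + (if k = j then int dj * int (u j) else 0))"
      by (intro sum.cong) (auto simp: d_def ji)
    also have "\<dots> = int di * int (u i) + int dj * int (u j)" using i jn by (simp add: sum.distrib)
    finally show ?thesis .
  qed
  have "int (ell n p d v) = (int di * int (v i) + int dj * int (v j)) mod int p"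
    unfolding ell_int sumd by (rule refl)
  also have "\<dots> = (int (w j) * z * int (v i) + - int (w i) * z * int (v j)) mod int p"
    unfolding di dj by (rule modh)
  also have "\<dots> = (D * z) mod int p" by (simp add: D_def algebra_simps)
  also have "\<dots> = 1" using z p2 by (simp add: cong_def)
  finally have 1: "ell n p d v = 1" by simp
  have "int (ell n p d w) = (int di * int (w i) + int dj * int (w j)) mod int p"
    unfolding ell_int sumd by (rule refl)
  also have "\<dots> = (int (w j) * z * int (w i) + - int (w i) * z * int (w j)) mod int p"
    unfolding di dj by (rule modh)
  also have "\<dots> = 0" by (simp add: algebra_simps)
  finally have 2: "ell n p d w = 0" by simp
  show ?thesis using 1 2 dD by blast
qed




definition tau :: "nat \<Rightarrow> nat \<Rightarrow> nat" where "tau p s = (p + 1 - s) mod p"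

lemma tau_iff:
  assumes "p \<ge> 2" "s < p" "t < p"
  shows "((t + s) mod p = 1) \<longleftrightarrow> t = tau p s"
proof -
  have m: "(t + s) mod p = (if t + s < p then t + s else t + s - p)"
  proof (cases "t + s < p")
    case True then show ?thesis by simp
  next
    case False
    then have "(t + s) mod p = (t + s - p) mod p" by (simp add: le_mod_geq)
    also have "\<dots> = t + s - p" using assms False by simp
    finally show ?thesis using False by simp
  qed
  have p1: "(p + 1) mod p = 1 mod p" by (rule mod_add_self1)
  have ta: "tau p s = (if s = 0 then 1 else if s = 1 then 0 else p + 1 - s)"
    using assms p1 by (auto simp: tau_def)
  show ?thesis unfolding m ta using assms by auto
qed

lemma tau_lt: "p > 0 \<Longrightarrow> tau p s < p" by (simp add: tau_def)

lemma tau_inj: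
  assumes "p \<ge> 2" shows "inj_on (tau p) {..<p}"
proof
  fix x y assume x: "x \<in> {..<p}" and y: "y \<in> {..<p}" and e: "tau p x = tau p y"
  have t: "tau p x < p" using assms tau_lt by simp
  have "(tau p x + x) mod p = 1" using tau_iff[of p x "tau p x"] assms x t by simp
  moreover have "(tau p x + y) mod p = 1" using tau_iff[of p y "tau p x"] assms y t e by simp
  ultimately have "[tau p x + x = tau p x + y] (mod p)" unfolding cong_def by simp
  then have "[x = y] (mod p)" using cong_add_lcancel_nat by blast
  then show "x = y" using x y by (simp add: cong_def)
qed

lemma tau_img:
  assumes "p \<ge> 2" shows "tau p ` {..<p} = {..<p}"
  by (rule endo_inj_surj[OF _ _ tau_inj[OF assms]]) (use assms tau_lt in auto)

lemma upd_inj: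
  assumes "v 0 = 0" "w 0 = 0" "v(0 := t) = w(0 := s)"
  shows "v = w \<and> t = s"
proof
  show "v = w"
  proof
    fix i show "v i = w i" using fun_cong[OF assms(3), of i] assms(1,2) by (cases "i = 0") auto
  qed
  show "t = s" using fun_cong[OF assms(3), of 0] by simp
qed

lemma Xhat_img:
  assumes "n > 0"
  shows "Xhat n p = (\<lambda>(t, v). v(0 := t)) ` ({..<p} \<times> Vset n p)"
proof
  show "Xhat n p \<subseteq> (\<lambda>(t, v). v(0 := t)) ` ({..<p} \<times> Vset n p)"
  proof
    fix x assume x: "x \<in> Xhat n p"
    have "x 0 < p" using x assms by (auto simp: Xhat_def Zpn_def)
    moreover have "x(0 := 0) \<in> Vset n p" using x by (auto simp: Xhat_def Vset_def Dset_def Zpn_def)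
    ultimately show "x \<in> (\<lambda>(t, v). v(0 := t)) ` ({..<p} \<times> Vset n p)"
      by (intro image_eqI[where x="(x 0, x(0:=0))"]) auto
  qed
  show "(\<lambda>(t, v). v(0 := t)) ` ({..<p} \<times> Vset n p) \<subseteq> Xhat n p"
    using assms apply (auto simp: Xhat_def Vset_def Dset_def Zpn_def)
    by (metis atLeastLessThan_iff One_nat_def)
qed

lemma Xhat_inj: "inj_on (\<lambda>(t, v). v(0 := t)) ({..<p} \<times> Vset n p)"
  by (rule inj_onI) (auto simp: Vset_def Dset_def dest: upd_inj)

lemma dot_upd:
  assumes "a 0 = 1" "v 0 = 0" "n > 0"
  shows "dotp n a (v(0 := t)) = t + (\<Sum>i<n. a i * v i)"
proof -
  have "dotp n a (v(0 := t)) = (\<Sum>i<n. a i * v i + (if i = 0 then t else 0))"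
    unfolding dotp_def by (intro sum.cong) (auto simp: assms)
  also have "\<dots> = (\<Sum>i<n. a i * v i) + t" using assms by (simp add: sum.distrib)
  finally show ?thesis by simp
qed

lemma Sf_img:
  assumes p: "p \<ge> 2" and n: "n > 0" and a: "a \<in> Aset n p"
  shows "Sf n p (Lpred n p a) = (\<lambda>v. v(0 := tau p (ell n p a v))) ` Vset n p"
proof -
  have a0: "a 0 = 1" using a by (simp add: Aset_def)
  have key: "dotp n a (v(0 := t)) mod p = 1 \<longleftrightarrow> t = tau p (ell n p a v)"
    if "t < p" "v \<in> Vset n p" for t v
  proof -
    have v0: "v 0 = 0" using that by (simp add: Vset_def Dset_def)
    have "dotp n a (v(0 := t)) mod p = (t + ell n p a v) mod p"
      unfolding dot_upd[where a=a and v=v and n=n, OF a0 v0 n] ell_def by (simp add: mod_add_right_eq)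
    moreover have "ell n p a v < p" using p by (simp add: ell_def)
    ultimately show ?thesis using tau_iff[OF p _ that(1)] by simp
  qed
  have Sf: "Sf n p (Lpred n p a) = {x \<in> Xhat n p. dotp n a x mod p = 1}"
    by (auto simp: Sf_def Lpred_def)
  show ?thesis
  proof
    show "Sf n p (Lpred n p a) \<subseteq> (\<lambda>v. v(0 := tau p (ell n p a v))) ` Vset n p"
    proof
      fix x assume "x \<in> Sf n p (Lpred n p a)"
      then have x: "x \<in> Xhat n p" "dotp n a x mod p = 1" using Sf by auto
      then obtain t v where tv: "t < p" "v \<in> Vset n p" "x = v(0 := t)" using Xhat_img[OF n] by auto
      then have "t = tau p (ell n p a v)" using key x(2) by simp
      then show "x \<in> (\<lambda>v. v(0 := tau p (ell n p a v))) ` Vset n p" using tv by blast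
    qed
    show "(\<lambda>v. v(0 := tau p (ell n p a v))) ` Vset n p \<subseteq> Sf n p (Lpred n p a)"
    proof
      fix x assume "x \<in> (\<lambda>v. v(0 := tau p (ell n p a v))) ` Vset n p"
      then obtain v where v: "v \<in> Vset n p" "x = v(0 := tau p (ell n p a v))" by blast
      have t: "tau p (ell n p a v) < p" using p tau_lt by simp
      have "x \<in> Xhat n p" using v t Xhat_img[OF n] by auto
      moreover have "dotp n a x mod p = 1" using key[OF t v(1)] v(2) by simp
      ultimately show "x \<in> Sf n p (Lpred n p a)" using Sf by simp
    qed
  qed
qed

lemma Sf_inj: "inj_on (\<lambda>v. v(0 := tau p (ell n p a v))) (Vset n p)"
  by (rule inj_onI) (auto simp: Vset_def Dset_def dest: upd_inj)




definition hh :: "nat \<Rightarrow> ((nat \<Rightarrow> nat) \<Rightarrow> real) \<Rightarrow> (nat \<Rightarrow> nat) \<Rightarrow> nat \<Rightarrow> real" where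
  "hh p g v s = g (v(0 := tau p s))"
definition mm :: "nat \<Rightarrow> ((nat \<Rightarrow> nat) \<Rightarrow> real) \<Rightarrow> (nat \<Rightarrow> nat) \<Rightarrow> real" where
  "mm p g v = (\<Sum>s<p. hh p g v s) / real p"
definition GG :: "nat \<Rightarrow> ((nat \<Rightarrow> nat) \<Rightarrow> real) \<Rightarrow> (nat \<Rightarrow> nat) \<Rightarrow> nat \<Rightarrow> real" where
  "GG p g v s = hh p g v s - mm p g v"
definition YY :: "nat \<Rightarrow> nat \<Rightarrow> ((nat \<Rightarrow> nat) \<Rightarrow> real) \<Rightarrow> (nat \<Rightarrow> nat) \<Rightarrow> real" where
  "YY n p g a = (\<Sum>v\<in>Vset n p. GG p g v (ell n p a v))"

context
  fixes p n :: nat and g :: "(nat \<Rightarrow> nat) \<Rightarrow> real"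
  assumes pr: "prime p" and n2: "2 \<le> n" and gpm: "\<forall>x\<in>Xhat n p. g x = -1 \<or> g x = 1"
begin

lemma p2: "p \<ge> 2" using pr prime_ge_2_nat by blast
lemma n0: "n > 0" using n2 by simp

lemma card_Xhat: "card (Xhat n p) = p * card (Vset n p)"
  unfolding Xhat_img[OF n0] using card_image[OF Xhat_inj] by (simp add: card_cartesian_product)

lemma sum_Xhat: "(\<Sum>x\<in>Xhat n p. g x) = (\<Sum>v\<in>Vset n p. \<Sum>s<p. hh p g v s)"
proof -
  have "(\<Sum>x\<in>Xhat n p. g x) = (\<Sum>(t, v)\<in>{..<p} \<times> Vset n p. g (v(0 := t)))"
    unfolding Xhat_img[OF n0] by (subst sum.reindex[OF Xhat_inj]; simp add: case_prod_beta')
  also have "\<dots> = (\<Sum>t<p. \<Sum>v\<in>Vset n p. g (v(0 := t)))"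
    by (simp add: sum.cartesian_product)
  also have "\<dots> = (\<Sum>v\<in>Vset n p. \<Sum>t<p. g (v(0 := t)))" by (rule sum.swap)
  also have "\<dots> = (\<Sum>v\<in>Vset n p. \<Sum>s<p. hh p g v s)"
  proof (rule sum.cong[OF refl])
    fix v
    have "(\<Sum>t<p. g (v(0 := t))) = (\<Sum>t\<in>tau p ` {..<p}. g (v(0 := t)))" using tau_img[OF p2] by simp
    also have "\<dots> = (\<Sum>s<p. hh p g v s)" by (subst sum.reindex[OF tau_inj[OF p2]]) (simp add: hh_def)
    finally show "(\<Sum>t<p. g (v(0 := t))) = (\<Sum>s<p. hh p g v s)" .
  qed
  finally show ?thesis .
qed

lemma card_Sf: "a \<in> Aset n p \<Longrightarrow> card (Sf n p (Lpred n p a)) = card (Vset n p)"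
  unfolding Sf_img[OF p2 n0] using card_image[OF Sf_inj] by simp

lemma sum_Sf: "a \<in> Aset n p \<Longrightarrow> (\<Sum>x\<in>Sf n p (Lpred n p a). g x) = (\<Sum>v\<in>Vset n p. hh p g v (ell n p a v))"
  unfolding Sf_img[OF p2 n0] by (subst sum.reindex[OF Sf_inj]) (simp add: hh_def)

lemma e1V: "(\<lambda>i. if i = 1 then 1 else 0) \<in> Vset n p"
  using n2 p2 by (auto simp: Vset_def Dset_def Zpn_def)

lemma Vne: "card (Vset n p) > 0"
  using e1V finite_sets(3) card_gt_0_iff by blast

lemma card_A: "card (Aset n p) = card (Vset n p) + 1"
proof -
  have "bij_betw (\<lambda>a. a(0 := 0)) (Aset n p) (Dset n p)"
  proof (rule bij_betw_byWitness[where f'="\<lambda>d. d(0 := 1)"])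
    show "\<forall>a\<in>Aset n p. a(0 := 0, 0 := 1) = a" by (auto simp: Aset_def)
    show "\<forall>a\<in>Dset n p. a(0 := 1, 0 := 0) = a" by (auto simp: Dset_def)
    show "(\<lambda>a. a(0 := 0)) ` Aset n p \<subseteq> Dset n p" using p2 by (auto simp: Aset_def Dset_def Zpn_def)
    show "(\<lambda>d. d(0 := 1)) ` Dset n p \<subseteq> Aset n p" using p2 n0 by (auto simp: Aset_def Dset_def Zpn_def)
  qed
  then have 1: "card (Aset n p) = card (Dset n p)" by (rule bij_betw_same_card)
  have "Dset n p = insert (\<lambda>_. 0) (Vset n p)"
  proof
    show "Dset n p \<subseteq> insert (\<lambda>_. 0) (Vset n p)"
    proof
      fix d assume d: "d \<in> Dset n p"
      show "d \<in> insert (\<lambda>_. 0) (Vset n p)"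
      proof (cases "\<exists>i\<in>{1..<n}. d i \<noteq> 0")
        case True then show ?thesis using d by (simp add: Vset_def)
      next
        case False
        have "d = (\<lambda>_. 0)"
        proof
          fix i show "d i = 0" using False d
            by (cases "i = 0"; cases "i < n") (auto simp: Dset_def Zpn_def)
        qed
        then show ?thesis by simp
      qed
    qed
    show "insert (\<lambda>_. 0) (Vset n p) \<subseteq> Dset n p" using p2 by (auto simp: Vset_def Dset_def Zpn_def)
  qed
  moreover have "(\<lambda>_. 0) \<notin> Vset n p" by (simp add: Vset_def)
  ultimately have "card (Dset n p) = card (Vset n p) + 1" using finite_sets(3) by simp
  then show ?thesis using 1 by simp
qed

lemma dev:
  assumes a: "a \<in> Aset n p"
  shows "avg (Sf n p (Lpred n p a)) g - avg (Xhat n p) g = YY n p g a / real (card (Vset n p))"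
proof -
  let ?N = "real (card (Vset n p))"
  have N: "?N > 0" using Vne by simp
  have pp: "real p > 0" using p2 by simp
  have "avg (Xhat n p) g = (\<Sum>v\<in>Vset n p. (\<Sum>s<p. hh p g v s)) / (real p * ?N)"
    unfolding avg_def sum_Xhat card_Xhat by simp
  also have "\<dots> = (\<Sum>v\<in>Vset n p. mm p g v) / ?N"
    using pp by (simp add: mm_def sum_divide_distrib[symmetric])
  finally have X: "avg (Xhat n p) g = (\<Sum>v\<in>Vset n p. mm p g v) / ?N" .
  have S: "avg (Sf n p (Lpred n p a)) g = (\<Sum>v\<in>Vset n p. hh p g v (ell n p a v)) / ?N"
    unfolding avg_def sum_Sf[OF a] card_Sf[OF a] ..
  show ?thesis unfolding X S YY_def GG_def using N by (simp add: sum_subtractf diff_divide_distrib)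
qed

lemma hh_sq: "v \<in> Vset n p \<Longrightarrow> s < p \<Longrightarrow> (hh p g v s)^2 = 1"
proof -
  assume v: "v \<in> Vset n p" and s: "s < p"
  have "tau p s < p" using p2 tau_lt by simp
  then have "v(0 := tau p s) \<in> Xhat n p" using v Xhat_img[OF n0] by auto
  then show ?thesis using gpm by (auto simp: hh_def)
qed

lemma GG_sum: "(\<Sum>s<p. GG p g v s) = 0"
  using p2 by (simp add: GG_def sum_subtractf mm_def)

lemma GG_sq: "v \<in> Vset n p \<Longrightarrow> (\<Sum>s<p. (GG p g v s)^2) \<le> real p"
proof -
  assume v: "v \<in> Vset n p"
  let ?m = "mm p g v"
  have hs: "(\<Sum>s<p. hh p g v s) = real p * ?m" using p2 by (simp add: mm_def)
  have "(\<Sum>s<p. (GG p g v s)^2) = (\<Sum>s<p. 1 - 2 * ?m * hh p g v s + ?m^2)"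
  proof (intro sum.cong refl)
    fix s assume "s \<in> {..<p}"
    then have "(hh p g v s)^2 = 1" using hh_sq v by simp
    then show "(GG p g v s)^2 = 1 - 2 * ?m * hh p g v s + ?m^2"
      unfolding GG_def by (simp add: power2_diff algebra_simps)
  qed
  also have "\<dots> = real p - 2 * ?m * (\<Sum>s<p. hh p g v s) + real p * ?m^2"
    by (simp add: sum.distrib sum_subtractf sum_distrib_left)
  also have "\<dots> = real p - real p * ?m^2" unfolding hs by (simp add: power2_eq_square)
  also have "\<dots> \<le> real p" by simp
  finally show ?thesis .
qed

lemma Q_bound:
  assumes v: "v \<in> Vset n p"
  shows "(\<Sum>a\<in>Aset n p. (GG p g v (ell n p a v))^2) \<le> real (card (Aset n p))"
proof -
  obtain d where d: "d \<in> Dset n p" "ell n p d v = 1" using exists_d1[OF pr v] by blast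
  have d0: "ell n p d (\<lambda>_. 0) = 0" by (simp add: ell_def)
  have "real p * (\<Sum>a\<in>Aset n p. (GG p g v (ell n p a v))^2 * (\<lambda>_. 1::real) (ell n p a (\<lambda>_. 0)))
      = (\<Sum>s<p. (GG p g v s)^2) * (\<Sum>a\<in>Aset n p. (\<lambda>_. 1::real) (ell n p a (\<lambda>_. 0)))"
    by (rule shift_sum[OF p2 d d0])
  then have "real p * (\<Sum>a\<in>Aset n p. (GG p g v (ell n p a v))^2)
     = (\<Sum>s<p. (GG p g v s)^2) * real (card (Aset n p))" by simp
  also have "\<dots> \<le> real p * real (card (Aset n p))" using GG_sq[OF v] by (simp add: mult_right_mono)
  finally show ?thesis using p2 by simp
qed

lemma amgm: "x * y \<le> (x^2 + y^2) / (2::real)"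
proof -
  have "0 \<le> (x - y)^2" by simp
  moreover have "(x - y)^2 = x^2 + y^2 - 2 * x * y" by (simp add: power2_diff)
  ultimately have "2 * (x * y) \<le> x^2 + y^2" by linarith
  then show ?thesis by (simp add: field_simps)
qed

lemma P_zero:
  assumes v: "v \<in> Vset n p" and w: "w \<in> Vset n p" and nm: "w \<notin> mults n p v"
  shows "(\<Sum>a\<in>Aset n p. GG p g v (ell n p a v) * GG p g w (ell n p a w)) = 0"
proof -
  have wD: "w \<in> Dset n p" using w by (simp add: Vset_def)
  obtain d where d: "d \<in> Dset n p" "ell n p d v = 1" "ell n p d w = 0"
    using exists_d2[OF pr v wD nm] by blast
  have "real p * (\<Sum>a\<in>Aset n p. GG p g v (ell n p a v) * GG p g w (ell n p a w))
      = (\<Sum>s<p. GG p g v s) * (\<Sum>a\<in>Aset n p. GG p g w (ell n p a w))"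
    by (rule shift_sum[OF p2 d])
  then show ?thesis using p2 GG_sum by simp
qed

lemma P_bound:
  assumes v: "v \<in> Vset n p" and w: "w \<in> Vset n p"
  shows "(\<Sum>a\<in>Aset n p. GG p g v (ell n p a v) * GG p g w (ell n p a w)) \<le> real (card (Aset n p))"
proof -
  have "(\<Sum>a\<in>Aset n p. GG p g v (ell n p a v) * GG p g w (ell n p a w))
     \<le> (\<Sum>a\<in>Aset n p. ((GG p g v (ell n p a v))^2 + (GG p g w (ell n p a w))^2) / 2)"
    by (rule sum_mono) (rule amgm)
  also have "\<dots> = ((\<Sum>a\<in>Aset n p. (GG p g v (ell n p a v))^2) + (\<Sum>a\<in>Aset n p. (GG p g w (ell n p a w))^2)) / 2"
    by (simp add: sum.distrib sum_divide_distrib[symmetric])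
  also have "\<dots> \<le> real (card (Aset n p))" using Q_bound[OF v] Q_bound[OF w] by simp
  finally show ?thesis .
qed

lemma row_bound:
  assumes v: "v \<in> Vset n p"
  shows "(\<Sum>w\<in>Vset n p. \<Sum>a\<in>Aset n p. GG p g v (ell n p a v) * GG p g w (ell n p a w))
     \<le> real p * real (card (Aset n p))"
proof -
  let ?c = "real (card (Aset n p))" and ?M = "mults n p v" and ?V = "Vset n p"
  have "(\<Sum>w\<in>?V. \<Sum>a\<in>Aset n p. GG p g v (ell n p a v) * GG p g w (ell n p a w))
      \<le> (\<Sum>w\<in>?V. if w \<in> ?M then ?c else 0)"
  proof (rule sum_mono)
    fix w assume w: "w \<in> ?V"
    show "(\<Sum>a\<in>Aset n p. GG p g v (ell n p a v) * GG p g w (ell n p a w)) \<le> (if w \<in> ?M then ?c else 0)"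
      using P_zero[OF v w] P_bound[OF v w] by auto
  qed
  also have "\<dots> = (\<Sum>w\<in>?V \<inter> ?M. ?c)" by (rule sum.inter_restrict[OF finite_sets(3), symmetric])
  also have "\<dots> = real (card (?V \<inter> ?M)) * ?c" by simp
  also have "\<dots> \<le> real p * ?c"
  proof (rule mult_right_mono)
    have "card (?V \<inter> ?M) \<le> card ?M" by (rule card_mono) (auto simp: mults_def)
    then show "real (card (?V \<inter> ?M)) \<le> real p" using card_mults[of n p v] by simp
  qed simp
  finally show ?thesis .
qed

lemma second_moment:
  "(\<Sum>a\<in>Aset n p. (YY n p g a)^2) \<le> real (card (Vset n p)) * (real p * real (card (Aset n p)))"
proof -
  let ?V = "Vset n p" and ?A = "Aset n p"
  have "(\<Sum>a\<in>?A. (YY n p g a)^2) = (\<Sum>a\<in>?A. \<Sum>v\<in>?V. \<Sum>w\<in>?V. GG p g v (ell n p a v) * GG p g w (ell n p a w))"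
    unfolding YY_def power2_eq_square by (simp add: sum_product)
  also have "\<dots> = (\<Sum>v\<in>?V. \<Sum>a\<in>?A. \<Sum>w\<in>?V. GG p g v (ell n p a v) * GG p g w (ell n p a w))"
    by (rule sum.swap)
  also have "\<dots> = (\<Sum>v\<in>?V. \<Sum>w\<in>?V. \<Sum>a\<in>?A. GG p g v (ell n p a v) * GG p g w (ell n p a w))"
    by (rule sum.cong[OF refl]) (rule sum.swap)
  also have "\<dots> \<le> (\<Sum>v\<in>?V. real p * real (card ?A))"
    by (rule sum_mono) (rule row_bound)
  also have "\<dots> = real (card ?V) * (real p * real (card ?A))" by simp
  finally show ?thesis .
qed

lemma final:
  "real (card {f \<in> Lclass n p. \<not> xi_independent n p (1 / real p powr (real n / 3)) f g})
           \<le> real p powr (2 * real n / 3 + 2)"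
proof -
  define q where "q = real p powr (real n / 3)"
  define \<epsilon> where "\<epsilon> = 1 / q"
  let ?N = "real (card (Vset n p))" and ?c = "real (card (Aset n p))"
  define B where "B = {a \<in> Aset n p. \<epsilon> < \<bar>YY n p g a / ?N\<bar>}"
  have pp: "real p > 0" using p2 by simp
  have q0: "q > 0" using pp by (simp add: q_def)
  have e0: "\<epsilon> > 0" using q0 by (simp add: \<epsilon>_def)
  have N0: "?N > 0" using Vne by simp
  have finB: "finite B" using finite_sets(1) by (simp add: B_def)
  have sub: "{f \<in> Lclass n p. \<not> xi_independent n p (1 / real p powr (real n / 3)) f g} \<subseteq> Lpred n p ` B"
  proof
    fix f assume f: "f \<in> {f \<in> Lclass n p. \<not> xi_independent n p (1 / real p powr (real n / 3)) f g}"
    then obtain a where a: "f = Lpred n p a" "a \<in> Zpn n p" "a 0 = 1" by (auto simp: Lclass_def)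
    have aA: "a \<in> Aset n p" using a by (simp add: Aset_def)
    have "\<epsilon> < \<bar>avg (Sf n p f) g - avg (Xhat n p) g\<bar>"
      using f by (simp add: xi_independent_def \<epsilon>_def q_def)
    then have "a \<in> B" using dev[OF aA] aA a(1) by (simp add: B_def)
    then show "f \<in> Lpred n p ` B" using a(1) by blast
  qed
  have cardle: "card {f \<in> Lclass n p. \<not> xi_independent n p (1 / real p powr (real n / 3)) f g} \<le> card B"
    using card_mono[OF finite_imageI[OF finB] sub] card_image_le[OF finB, of "Lpred n p"] by linarith
  have Bsq: "(\<epsilon> * ?N)^2 \<le> (YY n p g a)^2" if a: "a \<in> B" for a
  proof -
    have "\<epsilon> < \<bar>YY n p g a\<bar> / ?N" using a N0 by (simp add: B_def abs_divide)
    then have "\<epsilon> * ?N < \<bar>YY n p g a\<bar>" using N0 by (simp add: pos_less_divide_eq)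
    then have "(\<epsilon> * ?N)^2 < \<bar>YY n p g a\<bar>^2"
      by (rule power_strict_mono) (use e0 N0 in auto)
    then show ?thesis by simp
  qed
  have "real (card B) * (\<epsilon> * ?N)^2 = (\<Sum>a\<in>B. (\<epsilon> * ?N)^2)" by simp
  also have "\<dots> \<le> (\<Sum>a\<in>B. (YY n p g a)^2)" by (rule sum_mono) (rule Bsq)
  also have "\<dots> \<le> (\<Sum>a\<in>Aset n p. (YY n p g a)^2)"
    by (rule sum_mono2[OF finite_sets(1)]) (auto simp: B_def)
  also have "\<dots> \<le> ?N * (real p * ?c)" by (rule second_moment)
  also have "\<dots> \<le> ?N * (real p * (2 * ?N))"
    using card_A N0 pp by (intro mult_left_mono) auto
  finally have "real (card B) * \<epsilon>^2 * ?N^2 \<le> (2 * real p) * ?N^2"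
    by (simp add: power_mult_distrib algebra_simps power2_eq_square)
  then have "real (card B) * \<epsilon>^2 \<le> 2 * real p" using N0 by simp
  moreover have "\<epsilon>^2 * q^2 = 1" using q0 by (simp add: \<epsilon>_def power_divide)
  ultimately have "real (card B) \<le> 2 * real p * q^2"
    by (metis (no_types, lifting) mult.assoc mult_right_mono mult_1_right zero_le_power2)
  also have "\<dots> \<le> real p ^ 2 * q^2"
    using p2 by (intro mult_right_mono) (auto simp: power2_eq_square)
  also have "\<dots> = real p powr (2 * real n / 3 + 2)"
  proof -
    have "q^2 = real p powr (2 * real n / 3)"
      unfolding q_def power2_eq_square using pp by (simp add: powr_add[symmetric])
    moreover have "real p ^ 2 = real p powr 2" using pp by (simp add: powr_numeral)
    ultimately show ?thesis using pp by (simp add: powr_add)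
  qed
  finally show ?thesis using cardle by linarith
qed

end



theorem mainTheorem4:
  fixes p n :: nat and g :: "(nat \<Rightarrow> nat) \<Rightarrow> real"
  assumes "prime p" and "n \<ge> 2"
    and "\<forall>x\<in>Xhat n p. g x = -1 \<or> g x = 1"
  shows "real (card {f \<in> Lclass n p. \<not> xi_independent n p (1 / real p powr (real n / 3)) f g})
           \<le> real p powr (2 * real n / 3 + 2)"
  using final[OF assms] .

end
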